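(* Let $n\ge1$, $K=\mathbb{R}^n_+$, and $\bar x\in K\cap\mathbb{Z}^n$. For every $k\in\{1,\dots,n\}$, every point $x\in Q(\bar x)$ satisfies the $k$-th lex-cut associated with $\bar x$, namely $$\sum_{i=1}^k d^k_i x_i\ \ge\ \sum_{i=1}^k d^k_i\bar x_i .$$
   Context: Lexicographic order: for $x,y\in\mathbb{R}^n$, $x\prec y$ iff $x\ne y$ and $x_i<y_i$ for the smallest index $i$ with $x_i\ne y_i$; $\succeq$ has the obvious meaning. $Q(\bar x):=\operatorname{conv}\{x\in K\cap\mathbb{Z}^n: x\succeq\bar x\}$. For $k\in\{1,\dots,n\}$ and $i\in\{1,\dots,k\}$: $d^k_k=1$; $d^k_{k-1}=\bar x_k$ (if $k\ge2$); and $d^k_i=\bar x_k\prod_{j=i+1}^{k-1}(\bar x_j+1)$ for $i\le k-2$. *)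

theory Defs
  imports "HOL-Analysis.Analysis"
begin

text \<open>Points of R^n are vectors of type real^('n::{finite,linorder}), with the index type 'n a finite linear order
  (playing the role of {1..n} with its usual order).\<close>

definition lex_less :: "real^('n::{finite,linorder}) \<Rightarrow> real^('n::{finite,linorder}) \<Rightarrow> bool" where
  "lex_less x y \<longleftrightarrow> x \<noteq> y \<and> (\<exists>i. x$i < y$i \<and> (\<forall>j<i. x$j = y$j))"

definition lex_ge :: "real^('n::{finite,linorder}) \<Rightarrow> real^('n::{finite,linorder}) \<Rightarrow> bool" where
  "lex_ge x y \<longleftrightarrow> x = y \<or> lex_less y x"

definition nonneg_int_points :: "(real^('n::{finite,linorder})) set" where
  "nonneg_int_points = {x. \<forall>i. 0 \<le> x$i \<and> x$i \<in> \<int>}"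

definition Q :: "real^('n::{finite,linorder}) \<Rightarrow> (real^('n::{finite,linorder})) set" where
  "Q xbar = convex hull {x \<in> nonneg_int_points. lex_ge x xbar}"

definition lexcut_coeff :: "real^('n::{finite,linorder}) \<Rightarrow> ('n::{finite,linorder}) \<Rightarrow> 'n \<Rightarrow> real" where
  "lexcut_coeff xbar k i =
     (if i = k then 1 else xbar$k * (\<Prod>j\<in>{i<..<k}. xbar$j + 1))"

end

theory Submission
  imports Defs
begin

lemma tel:
  fixes xbar :: "real^'n::{finite,linorder}"
  shows "p < k \<Longrightarrow> lexcut_coeff xbar k p = (\<Sum>i\<in>{p<..k}. lexcut_coeff xbar k i * xbar$i)"
proof (induction "card {p<..k}" arbitrary: p rule: less_induct)
  case less
  define q where "q = Min {p<..k}"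
  have ne: "{p<..k} \<noteq> {}" using less.prems by auto
  have qin: "q \<in> {p<..k}" unfolding q_def using ne by (intro Min_in) auto
  have qmin: "\<And>i. i \<in> {p<..k} \<Longrightarrow> q \<le> i" unfolding q_def by (intro Min_le) auto
  have split: "{p<..k} = insert q {q<..k}"
  proof (rule set_eqI)
    fix i show "i \<in> {p<..k} \<longleftrightarrow> i \<in> insert q {q<..k}"
      using qin qmin[of i] by (cases "i = q") auto
  qed
  have qnot: "q \<notin> {q<..k}" by auto
  have pk: "p \<noteq> k" using less.prems by auto
  show ?case
  proof (cases "q = k")
    case True
    have "{p<..<k} = {}"
    proof (rule ccontr)
      assume "{p<..<k} \<noteq> {}"
      then obtain i where "i \<in> {p<..<k}" by blast
      then show False using qmin[of i] True less_imp_le[of i k] by auto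
    qed
    then show ?thesis using True split pk by (simp add: lexcut_coeff_def)
  next
    case False
    then have qk: "q < k" using qin by auto
    have split2: "{p<..<k} = insert q {q<..<k}"
    proof (rule set_eqI)
      fix i show "i \<in> {p<..<k} \<longleftrightarrow> i \<in> insert q {q<..<k}"
        using qin qmin[of i] qk less_imp_le[of i k] by (cases "i = q") auto
    qed
    have "card {q<..k} < card {p<..k}" using split qnot by simp
    then have IH: "lexcut_coeff xbar k q = (\<Sum>i\<in>{q<..k}. lexcut_coeff xbar k i * xbar$i)"
      using less.hyps qk by blast
    have dq: "lexcut_coeff xbar k q = xbar$k * (\<Prod>j\<in>{q<..<k}. xbar$j + 1)"
      using False by (simp add: lexcut_coeff_def)
    have "lexcut_coeff xbar k p = xbar$k * (\<Prod>j\<in>{p<..<k}. xbar$j + 1)"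
      using pk by (simp add: lexcut_coeff_def)
    also have "\<dots> = (xbar$q + 1) * lexcut_coeff xbar k q"
      unfolding split2 dq by simp
    also have "\<dots> = lexcut_coeff xbar k q * xbar$q + (\<Sum>i\<in>{q<..k}. lexcut_coeff xbar k i * xbar$i)"
      using IH by (simp add: algebra_simps)
    also have "\<dots> = (\<Sum>i\<in>{p<..k}. lexcut_coeff xbar k i * xbar$i)"
      unfolding split using qnot by simp
    finally show ?thesis .
  qed
qed

lemma coeff_nonneg:
  fixes xbar :: "real^'n::{finite,linorder}"
  assumes "xbar \<in> nonneg_int_points"
  shows "lexcut_coeff xbar k i \<ge> 0"
proof -
  have "\<And>j. xbar$j \<ge> 0" using assms by (auto simp: nonneg_int_points_def)
  then show ?thesis unfolding lexcut_coeff_def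
    by (auto intro!: mult_nonneg_nonneg prod_nonneg simp: add_nonneg_nonneg)
qed

lemma points_ok:
  fixes xbar y :: "real^'n::{finite,linorder}" and k :: 'n
  assumes xb: "xbar \<in> nonneg_int_points"
    and y: "y \<in> nonneg_int_points" and lg: "lex_ge y xbar"
  shows "(\<Sum>i\<in>{..k}. lexcut_coeff xbar k i * y$i) \<ge> (\<Sum>i\<in>{..k}. lexcut_coeff xbar k i * xbar$i)"
proof (cases "y = xbar")
  case True then show ?thesis by simp
next
  case False
  let ?d = "lexcut_coeff xbar k"
  from False lg obtain p where p1: "xbar$p < y$p" and p2: "\<And>j. j < p \<Longrightarrow> xbar$j = y$j"
    by (auto simp: lex_ge_def lex_less_def)
  have yi: "\<And>j. y$j \<ge> 0 \<and> y$j \<in> \<int>" using y by (auto simp: nonneg_int_points_def)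
  have xi: "\<And>j. xbar$j \<ge> 0 \<and> xbar$j \<in> \<int>" using xb by (auto simp: nonneg_int_points_def)
  have p3: "y$p \<ge> xbar$p + 1"
  proof -
    obtain a where a: "y$p = of_int a" using yi by (meson Ints_cases)
    obtain b where b: "xbar$p = of_int b" using xi by (meson Ints_cases)
    show ?thesis using p1 unfolding a b by simp
  qed
  show ?thesis
  proof (cases "k < p")
    case True
    then show ?thesis using p2 by (intro eq_refl sum.cong) auto
  next
    case False
    then have pk: "p \<le> k" by simp
    have dec: "{..k} = {..<p} \<union> insert p {p<..k}" using pk by auto
    have fin: "finite {..<p}" "finite {p<..k}" by auto
    have dis: "{..<p} \<inter> insert p {p<..k} = {}" "p \<notin> {p<..k}" by auto
    have S: "\<And>f. (\<Sum>i\<in>{..k}. f i) = (\<Sum>i\<in>{..<p}. f i) + (f p + (\<Sum>i\<in>{p<..k}. f i))"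
      unfolding dec using fin dis by (simp add: sum.union_disjoint ac_simps)
    have A: "(\<Sum>i\<in>{..<p}. ?d i * y$i) = (\<Sum>i\<in>{..<p}. ?d i * xbar$i)"
      using p2 by (intro sum.cong) auto
    have B: "(\<Sum>i\<in>{p<..k}. ?d i * y$i) \<ge> 0"
      using yi coeff_nonneg[OF xb] by (intro sum_nonneg mult_nonneg_nonneg) auto
    have C: "?d p * y$p \<ge> ?d p * xbar$p + (\<Sum>i\<in>{p<..k}. ?d i * xbar$i)"
    proof (cases "p = k")
      case True then show ?thesis using p3 by (simp add: lexcut_coeff_def)
    next
      case False
      then have "p < k" using pk by simp
      from tel[OF this, of xbar] have e: "?d p = (\<Sum>i\<in>{p<..k}. ?d i * xbar$i)" .
      have "?d p * y$p \<ge> ?d p * (xbar$p + 1)"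
        using p3 coeff_nonneg[OF xb, of k p] by (intro mult_left_mono) auto
      then show ?thesis using e by (simp add: distrib_left)
    qed
    show ?thesis unfolding S[of "\<lambda>i. ?d i * y$i"] S[of "\<lambda>i. ?d i * xbar$i"] A
      using B C by linarith
  qed
qed

theorem lemma2:
  fixes xbar x :: "real^'n::{finite,linorder}" and k :: 'n
  assumes "xbar \<in> nonneg_int_points"
    and "x \<in> Q xbar"
  shows "(\<Sum>i\<in>{..k}. lexcut_coeff xbar k i * x$i) \<ge> (\<Sum>i\<in>{..k}. lexcut_coeff xbar k i * xbar$i)"
proof -
  let ?L = "\<lambda>y. (\<Sum>i\<in>{..k}. lexcut_coeff xbar k i * y$i)"
  let ?H = "{y. ?L y \<ge> ?L xbar}"
  have cv: "convex ?H"
  proof (rule convexI)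
    fix a b and u v :: real
    assume a: "a \<in> ?H" and b: "b \<in> ?H" and u: "0 \<le> u" and v: "0 \<le> v" and uv: "u + v = 1"
    have "?L (u *\<^sub>R a + v *\<^sub>R b) = u * ?L a + v * ?L b"
      by (simp add: sum_distrib_left sum.distrib algebra_simps)
    also have "\<dots> \<ge> u * ?L xbar + v * ?L xbar"
      using a b u v by (intro add_mono mult_left_mono) auto
    also have "u * ?L xbar + v * ?L xbar = ?L xbar" using uv by (metis distrib_right mult_1)
    finally show "u *\<^sub>R a + v *\<^sub>R b \<in> ?H" by simp
  qed
  have sub: "{y \<in> nonneg_int_points. lex_ge y xbar} \<subseteq> ?H"
    using points_ok[OF assms(1)] by auto
  have "Q xbar \<subseteq> ?H" unfolding Q_def using hull_minimal[of _ _ convex, OF sub cv] .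
  then show ?thesis using assms(2) by auto
qed

end
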